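(* Let $N\ge1$ and let $\{a_n\}_{n=0}^{N-1},\{b_n\}_{n=0}^{N-1},\{c_n\}_{n=1}^{N}$ be real sequences with $c_n>0$, $a_{N-1}=0$, $b_{N-1}=\tfrac12$, $c_N=1$, satisfying for $n=1,\dots,N-1$ $$a_{n-1}=a_n\Big(\frac{1}{c_n^2+1}\Big)^{1/2}+b_n\Big(\frac{1}{c_n^2+1}\Big)^{3/2}c_n^2,\quad b_{n-1}=b_n\Big(\frac{1}{c_n^2+1}\Big)^{3/2}+\frac{c_n}{c_n^2+1},\quad -3b_nc_n+(c_n^2+1)^{1/2}(1-c_n^2)=0.$$ Then for each $n\in\{2,\dots,N\}$, $c_{n-1}$ is the unique root in $(0,1)$ of the equation in $x$ $$\frac{1}{x}(x^2+1)^{1/2}(1-x^2)=\frac{1}{c_n^2+1}\Big(\frac{1}{c_n}+2c_n\Big),$$ $c_N>c_{N-1}>\cdots>c_2>c_1$, and $b_n=\dfrac{(c_n^2+1)^{1/2}}{3c_n}(1-c_n^2)$ for $n=1,\dots,N-1$.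
   Context: These sequences describe the equilibrium of the risk-seeking insider model (Model 3) of an $N$-period Kyle-type insider trading model, in which the insider's trading intensity in period $n$ is $c_n\sigma_u\Delta t_N^{1/2}\Sigma_{n-1}^{-1/2}$; the claim concerns only the sequences as defined here. *)

theory Defs
  imports "HOL-Analysis.Analysis"
begin

end

theory Submission
  imports Defs
begin

definition ff :: "real \<Rightarrow> real" where
  "ff x = (1 / x) * (x ^ 2 + 1) powr (1/2) * (1 - x ^ 2)"

lemma ff_sqrt: "ff x = sqrt (x^2+1) * (1 - x^2) / x"
  unfolding ff_def by (simp add: powr_half_sqrt add_nonneg_nonneg)

lemma sq_lt: assumes "0 < x" "x < y" shows "sqrt (y^2+1) * x < sqrt (x^2+1) * y"
proof -
  have "(sqrt (y^2+1) * x)^2 < (sqrt (x^2+1) * y)^2"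
    using assms by (simp add: power_mult_distrib algebra_simps power_strict_mono)
  thus ?thesis using assms
    by (smt (verit) power_mono real_sqrt_ge_zero zero_le_mult_iff add_nonneg_nonneg zero_le_power2)
qed

lemma ff_dec: assumes "0 < x" "x < y" "y < 1" shows "ff y < ff x"
proof -
  have a: "sqrt (y^2+1) * x < sqrt (x^2+1) * y" using sq_lt assms by auto
  have b: "0 < 1 - y^2" "1 - y^2 < 1 - x^2" using assms
    by (auto simp: power_strict_mono abs_square_less_1)
  have "sqrt (y^2+1) * (1 - y^2) * x = (sqrt (y^2+1) * x) * (1-y^2)" by simp
  also have "\<dots> < (sqrt (x^2+1) * y) * (1-y^2)" using a b by simp
  also have "\<dots> < (sqrt (x^2+1) * y) * (1-x^2)"
  proof (rule mult_strict_left_mono)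
    show "1 - y^2 < 1 - x^2" using b by simp
    have "sqrt (x^2+1) > 0" by (smt (verit) real_sqrt_gt_zero zero_le_power2)
    thus "0 < sqrt (x^2+1) * y" using assms by simp
  qed
  finally have "sqrt (y^2+1) * (1 - y^2) * x < sqrt (x^2+1) * (1 - x^2) * y"
    by (simp add: mult_ac)
  thus ?thesis using assms unfolding ff_sqrt by (simp add: divide_simps mult_ac)
qed

lemma ff_inj: assumes "0 < x" "x < 1" "0 < y" "y < 1" "ff x = ff y" shows "x = y"
  using ff_dec[of x y] ff_dec[of y x] assms by (cases "x < y"; cases "y < x") auto

lemma pow32: assumes "t > 0" shows "(1 / t) powr (3/2) = 1 / (t * sqrt t)"
proof -
  have "(1/t) powr (3/2) = (1/t) powr (1 + 1/2)" by simp
  also have "\<dots> = (1/t) powr 1 * (1/t) powr (1/2)" by (rule powr_add)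
  also have "\<dots> = (1/t) * (1/t) powr (1/2)" using assms by simp
  also have "\<dots> = 1 / (t * sqrt t)" using assms by (simp add: powr_half_sqrt real_sqrt_divide)
  finally show ?thesis .
qed

lemma key_ineq: assumes "0 < c" "c < 1"
  shows "ff c < (1 / (c ^ 2 + 1)) * (1 / c + 2 * c)"
proof -
  have s1: "sqrt (1 + c^2) \<le> 1 + c^2/2"
  proof (rule real_le_lsqrt)
    have "0 \<le> c^2*c^2" by simp
    thus "(1 + c^2) \<le> (1 + c^2/2)^2" by (simp add: power2_eq_square algebra_simps)
  qed (auto simp: add_nonneg_nonneg)
  have p: "0 < c^2" "c^2 < 1" using assms by (auto simp: abs_square_less_1)
  have "(1 + c^2) * (sqrt (c^2+1) * (1 - c^2)) = (1 - c^2*c^2) * sqrt (1+c^2)"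
    by (simp add: algebra_simps)
  also have "\<dots> < sqrt (1 + c^2)" using p
  proof -
    have "sqrt (1+c^2) > 0" by (smt (verit) real_sqrt_gt_zero zero_le_power2)
    moreover have "1 - c^2*c^2 < 1" using p by simp
    ultimately show ?thesis by simp
  qed
  also have "\<dots> < 1 + 2*c^2" using s1 p by linarith
  finally have K: "(1 + c^2) * (sqrt (c^2+1) * (1 - c^2)) < 1 + 2*c^2" .
  from K have "sqrt (c^2+1) * (1 - c^2) < (1 + 2*c^2) / (1 + c^2)"
    by (simp add: pos_less_divide_eq add_pos_nonneg mult.commute)
  hence "sqrt (c^2+1) * (1 - c^2) / c < (1 + 2*c^2) / (1 + c^2) / c"
    using assms by (intro divide_strict_right_mono)
  also have "\<dots> = (1 / (c ^ 2 + 1)) * (1 / c + 2 * c)"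
    using assms by (simp add: field_simps power2_eq_square)
  finally show ?thesis unfolding ff_sqrt .
qed

theorem proposition5:
  fixes N :: nat and a b c :: "nat \<Rightarrow> real"
  assumes hN: "N \<ge> 1"
    and cpos: "\<And>n. 1 \<le> n \<Longrightarrow> n \<le> N \<Longrightarrow> c n > 0"
    and aN: "a (N - 1) = 0"
    and bN: "b (N - 1) = 1/2"
    and cN: "c N = 1"
    and reca: "\<And>n. 1 \<le> n \<Longrightarrow> n \<le> N - 1 \<Longrightarrow>
       a (n - 1) = a n * (1 / (c n ^ 2 + 1)) powr (1/2)
                   + b n * (1 / (c n ^ 2 + 1)) powr (3/2) * c n ^ 2"
    and recb: "\<And>n. 1 \<le> n \<Longrightarrow> n \<le> N - 1 \<Longrightarrow>
       b (n - 1) = b n * (1 / (c n ^ 2 + 1)) powr (3/2) + c n / (c n ^ 2 + 1)"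
    and recc: "\<And>n. 1 \<le> n \<Longrightarrow> n \<le> N - 1 \<Longrightarrow>
       - 3 * b n * c n + (c n ^ 2 + 1) powr (1/2) * (1 - c n ^ 2) = 0"
  shows "(\<forall>n. 2 \<le> n \<and> n \<le> N \<longrightarrow>
            (\<exists>!x. 0 < x \<and> x < 1 \<and>
               (1 / x) * (x ^ 2 + 1) powr (1/2) * (1 - x ^ 2)
                 = (1 / (c n ^ 2 + 1)) * (1 / c n + 2 * c n))
            \<and> 0 < c (n - 1) \<and> c (n - 1) < 1
            \<and> (1 / c (n - 1)) * (c (n - 1) ^ 2 + 1) powr (1/2) * (1 - c (n - 1) ^ 2)
                 = (1 / (c n ^ 2 + 1)) * (1 / c n + 2 * c n))
       \<and> (\<forall>n. 2 \<le> n \<and> n \<le> N \<longrightarrow> c (n - 1) < c n)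
       \<and> (\<forall>n. 1 \<le> n \<and> n \<le> N - 1 \<longrightarrow>
            b n = (c n ^ 2 + 1) powr (1/2) / (3 * c n) * (1 - c n ^ 2))"
proof -
  define R where "R n = (1 / (c n ^ 2 + 1)) * (1 / c n + 2 * c n)" for n
  have bform: "b n = sqrt (c n ^ 2 + 1) * (1 - c n ^ 2) / (3 * c n)"
    if "1 \<le> n" "n \<le> N - 1" for n
  proof -
    have "c n > 0" using cpos that by auto
    thus ?thesis using recc[OF that]
      by (simp add: powr_half_sqrt add_nonneg_nonneg field_simps)
  qed
  have Rpos: "R n > 0" if "1 \<le> n" "n \<le> N" for n
    using cpos[OF that] unfolding R_def by (simp add: add_pos_pos)
  have eq: "ff (c (n-1)) = R n" if "2 \<le> n" "n \<le> N" for n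
  proof -
    have "ff (c (n-1)) = 3 * b (n-1)"
      using bform[of "n-1"] that cpos[of "n-1"] unfolding ff_sqrt by simp
    also have "\<dots> = R n"
    proof (cases "n = N")
      case True thus ?thesis using bN cN unfolding R_def by simp
    next
      case False
      hence n: "1 \<le> n" "n \<le> N - 1" using that by auto
      define x where "x = c n"
      have x: "x > 0" using cpos n x_def by auto
      have t: "x^2 + 1 > 0" by (simp add: add_pos_nonneg add_nonneg_pos)
      have "b (n-1) = b n * (1 / (x^2+1)) powr (3/2) + x / (x^2+1)"
        using recb[OF n] x_def by simp
      also have "\<dots> = sqrt (x^2+1) * (1 - x^2) / (3*x) * (1 / ((x^2+1) * sqrt (x^2+1)))
            + x / (x^2+1)" using bform[OF n] pow32[OF t] x_def by simp
      also have "\<dots> = (1-x^2)/(3*x*(x^2+1)) + x / (x^2+1)"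
      proof -
        have sp: "sqrt (x^2+1) > 0" using t by simp
        have "sqrt (x^2+1) * (1 - x^2) / (3*x) * (1 / ((x^2+1) * sqrt (x^2+1)))
           = (sqrt (x^2+1) / sqrt (x^2+1)) * ((1 - x^2) / (3*x*(x^2+1)))"
          by (simp only: times_divide_eq_left times_divide_eq_right divide_divide_eq_left mult_1_right mult_1_left) (simp add: mult_ac)
        also have "\<dots> = (1 - x^2) / (3*x*(x^2+1))" using sp by simp
        finally show ?thesis by simp
      qed
      also have "\<dots> = ((1-x^2) + 3*x^2)/(3*x*(x^2+1))"
      proof -
        have e: "x/(x^2+1) = 3*x^2/(3*x*(x^2+1))" using x t by (simp add: power2_eq_square)
        show ?thesis unfolding e add_divide_distrib ..
      qed
      also have "\<dots> = (1 / (x^2+1)) * (1/x + 2*x) / 3"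
      proof -
        have "1/x + 2*x = (1 + 2*x^2)/x" using x by (simp add: field_simps power2_eq_square)
        thus ?thesis
          by (simp only: times_divide_eq_left times_divide_eq_right divide_divide_eq_left mult_1_right mult_1_left) (simp add: mult_ac)
      qed
      finally have "b (n-1) = R n / 3" unfolding R_def x_def by simp
      thus ?thesis by simp
    qed
    finally show ?thesis .
  qed
  have lt1: "0 < c (n-1) \<and> c (n-1) < 1" if "2 \<le> n" "n \<le> N" for n
  proof -
    have p: "c (n-1) > 0" using cpos[of "n-1"] that by auto
    have "ff (c (n-1)) > 0" using eq[OF that] Rpos[of n] that by auto
    hence "1 - c (n-1)^2 > 0" using p unfolding ff_sqrt
      by (simp add: zero_less_divide_iff zero_less_mult_iff)
        (smt (verit) zero_le_power2)
    hence "c (n-1) < 1" using p by (smt (verit) one_le_power)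
    thus ?thesis using p by simp
  qed
  have P1: "\<forall>n. 2 \<le> n \<and> n \<le> N \<longrightarrow>
            (\<exists>!x. 0 < x \<and> x < 1 \<and> ff x = R n)
            \<and> 0 < c (n - 1) \<and> c (n - 1) < 1 \<and> ff (c (n-1)) = R n"
  proof (intro allI impI)
    fix n assume h: "2 \<le> n \<and> n \<le> N"
    show "(\<exists>!x. 0 < x \<and> x < 1 \<and> ff x = R n)
            \<and> 0 < c (n - 1) \<and> c (n - 1) < 1 \<and> ff (c (n-1)) = R n"
      using lt1[of n] eq[of n] h ff_inj by (metis)
  qed
  have P2: "\<forall>n. 2 \<le> n \<and> n \<le> N \<longrightarrow> c (n - 1) < c n"
  proof (intro allI impI)
    fix n assume h: "2 \<le> n \<and> n \<le> N"
    show "c (n-1) < c n"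
    proof (cases "n = N")
      case True thus ?thesis using lt1[of n] h cN by auto
    next
      case False
      have cn: "0 < c n" "c n < 1" using lt1[of "n+1"] h False by auto
      have "ff (c n) < ff (c (n-1))" using key_ineq[OF cn] eq[of n] h unfolding R_def by simp
      moreover have "0 < c (n-1)" "c (n-1) < 1" using lt1[of n] h by auto
      ultimately show ?thesis using ff_dec[of "c n" "c (n-1)"] cn
        by (cases "c n < c (n-1)"; cases "c n = c (n-1)") auto
    qed
  qed
  have P3: "\<forall>n. 1 \<le> n \<and> n \<le> N - 1 \<longrightarrow>
            b n = (c n ^ 2 + 1) powr (1/2) / (3 * c n) * (1 - c n ^ 2)"
    using bform by (simp add: powr_half_sqrt add_nonneg_nonneg)
  show ?thesis using P1 P2 P3 unfolding ff_def R_def by simp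
qed

end
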